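(* Let $p=\sum_{k=1}^n \lambda_k p_k$ be a mixture density on $\mathbb{R}^d$, where $\lambda_k\ge 0$, $\sum_k\lambda_k=1$, each $p_k$ is a probability density on $\mathbb{R}^d$, and for two indices $i\ne j$ with $\lambda_i+\lambda_j>0$ the components $p_i,p_j$ are the Gaussian densities of $\mathcal{N}(\mu_i,\Sigma_i)$ and $\mathcal{N}(\mu_j,\Sigma_j)$. Set $\lambda_{ij}=\lambda_i+\lambda_j$, $\mu_{ij}=\frac{\lambda_i}{\lambda_{ij}}\mu_i+\frac{\lambda_j}{\lambda_{ij}}\mu_j$, $\Sigma_{ij}=\frac{1}{\lambda_{ij}}\big(\lambda_i\Sigma_i+\lambda_j\Sigma_j+\lambda_i\lambda_j(\mu_i-\mu_j)(\mu_i-\mu_j)^\top\big)$, let $p_{ij}$ be the density of $\mathcal{N}(\mu_{ij},\Sigma_{ij})$, and let $p_{app}=\sum_{k\ne i,j}\lambda_k p_k+\lambda_{ij}\,p_{ij}$ be the mixture obtained by merging components $i$ and $j$. Then $$d_{sKL}(p,p_{app})\ \le\ B_s(i,j):=\lambda_i\, d_{sKL}(p_i,p_{ij})+\lambda_j\, d_{sKL}(p_j,p_{ij}).$$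
   Context: For probability densities $p,q$ on $\mathbb{R}^d$, $d_{sKL}(p,q)=\int p\log\frac{p}{q}\,\mathrm{d}x+\int q\log\frac{q}{p}\,\mathrm{d}x$ (symmetrized Kullback–Leibler divergence). In the paper the components are projected Gaussians (mixture of projected Gaussians) whose rotational parts have been transferred to a common tangent space, so that the two components to be merged and their merge are Gaussian densities on the same space $\mathbb{R}^d$. *)

theory Defs
  imports "HOL-Analysis.Analysis"
begin

definition prob_density :: "(real^'n::finite \<Rightarrow> real) \<Rightarrow> bool" where
  "prob_density f \<longleftrightarrow> f \<in> borel_measurable lborel \<and> (\<forall>x. 0 \<le> f x)
      \<and> (\<integral>\<^sup>+ x. ennreal (f x) \<partial>lborel) = 1"

definition pos_def_mat :: "real^'n^'n \<Rightarrow> bool" where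
  "pos_def_mat S \<longleftrightarrow> transpose S = S \<and> (\<forall>v. v \<noteq> 0 \<longrightarrow> 0 < v \<bullet> (S *v v))"

definition gauss_density :: "real^'n \<Rightarrow> real^'n^'n \<Rightarrow> real^'n \<Rightarrow> real" where
  "gauss_density mu S x =
     exp (- (1/2) * ((x - mu) \<bullet> (matrix_inv S *v (x - mu))))
       / sqrt ((2 * pi) ^ CARD('n) * det S)"

definition outer :: "real^'n \<Rightarrow> real^'n \<Rightarrow> real^'n^'n" where
  "outer u v = (\<chi> a b. u $ a * v $ b)"

definition KL :: "(real^'n::finite \<Rightarrow> real) \<Rightarrow> (real^'n \<Rightarrow> real) \<Rightarrow> real" where
  "KL p q = (\<integral> x. p x * ln (p x / q x) \<partial>lborel)"

definition dsKL :: "(real^'n::finite \<Rightarrow> real) \<Rightarrow> (real^'n \<Rightarrow> real) \<Rightarrow> real" where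
  "dsKL p q = KL p q + KL q p"

end

theory Submission imports Defs "HOL-Probability.Distributions" begin

definition posq :: "real^'n^'n \<Rightarrow> bool" where
  "posq S \<longleftrightarrow> (\<forall>v. v \<noteq> 0 \<longrightarrow> 0 < v \<bullet> (S *v v))"

lemma posq_inj: assumes "posq S" shows "inj ((*v) S)"
proof (rule injI)
  fix x y assume "S *v x = S *v y"
  then have "S *v (x - y) = 0" by (simp add: matrix_vector_mult_diff_distrib)
  then show "x = y" using assms unfolding posq_def
    by (metis inner_zero_right less_irrefl right_minus_eq)
qed

lemma posq_invertible: assumes "posq S" shows "invertible S"
  using posq_inj[OF assms] matrix_left_invertible_injective invertible_left_inverse by blast

lemma matrix_inv_props: assumes "invertible A"
  shows "A ** matrix_inv A = mat 1" "matrix_inv A ** A = mat 1"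
proof -
  have "\<exists>A'. A ** A' = mat 1 \<and> A' ** A = mat 1" using assms unfolding invertible_def by blast
  from someI_ex[OF this] show "A ** matrix_inv A = mat 1" "matrix_inv A ** A = mat 1"
    unfolding matrix_inv_def by auto
qed

lemma posq_inv: assumes "posq S" shows "posq (matrix_inv S)"
  unfolding posq_def
proof (intro allI impI)
  fix y :: "real^'a" assume y: "y \<noteq> 0"
  define w where "w = matrix_inv S *v y"
  have inv: "invertible S" using posq_invertible[OF assms] .
  have Sw: "S *v w = y" unfolding w_def matrix_vector_mul_assoc matrix_inv_props[OF inv] by simp
  have "w \<noteq> 0" using Sw y by auto
  then have "0 < w \<bullet> (S *v w)" using assms unfolding posq_def by blast
  then show "0 < y \<bullet> (matrix_inv S *v y)" using Sw unfolding w_def[symmetric] by (simp add: inner_commute)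
qed

lemma posq_lower: assumes "posq S" shows "\<exists>c>0. \<forall>v. c * (norm v)^2 \<le> v \<bullet> (S *v v)"
proof -
  let ?f = "\<lambda>v::real^'a. v \<bullet> (S *v v)"
  have cont: "continuous_on (sphere 0 1) ?f"
    by (intro continuous_intros linear_continuous_on matrix_vector_mul_bounded_linear)
  have ne: "sphere (0::real^'a) 1 \<noteq> {}" by simp
  obtain u where u: "u \<in> sphere 0 1" "\<forall>v\<in>sphere 0 1. ?f u \<le> ?f v"
    using continuous_attains_inf[OF compact_sphere ne cont] by blast
  have u0: "u \<noteq> 0" using u(1) by auto
  have cpos: "0 < ?f u" using assms u0 unfolding posq_def by blast
  show ?thesis
  proof (intro exI[of _ "?f u"] conjI allI cpos)
    fix v :: "real^'a"
    show "?f u * (norm v)^2 \<le> ?f v"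
    proof (cases "v = 0")
      case True then show ?thesis by simp
    next
      case False
      let ?w = "(1/norm v) *\<^sub>R v"
      have "?w \<in> sphere 0 1" using False by simp
      then have "?f u \<le> ?f ?w" using u by blast
      also have "?f ?w = ?f v / (norm v)^2"
        by (simp add: matrix_vector_mult_scaleR power2_eq_square)
      finally show ?thesis using False by (simp add: field_simps)
    qed
  qed
qed

lemma quad_upper: "\<exists>C>0. \<forall>v::real^'n. \<bar>v \<bullet> (S *v v)\<bar> \<le> C * (norm v)^2"
proof -
  obtain B where B: "B > 0" "\<And>x. norm (S *v x) \<le> norm x * B"
    using bounded_linear.pos_bounded[OF matrix_vector_mul_bounded_linear[of S]] by blast
  show ?thesis
  proof (intro exI[of _ B] conjI allI B(1))
    fix v :: "real^'n"
    have "\<bar>v \<bullet> (S *v v)\<bar> \<le> norm v * norm (S *v v)" by (rule Cauchy_Schwarz_ineq2)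
    also have "\<dots> \<le> norm v * (norm v * B)" by (rule mult_left_mono[OF B(2)]) simp
    finally show "\<bar>v \<bullet> (S *v v)\<bar> \<le> B * (norm v)^2" by (simp add: power2_eq_square algebra_simps)
  qed
qed


lemma posq_det_nz: "posq S \<Longrightarrow> det S \<noteq> 0"
  using posq_invertible invertible_det_nz by blast

lemma cont_det_path: "continuous_on UNIV (\<lambda>t::real. det ((1 - t) *\<^sub>R mat 1 + t *\<^sub>R (S::real^'n^'n)))"
  unfolding det_def
  by (intro continuous_intros)

lemma posq_det_pos: assumes "posq S" shows "det S > 0"
proof (rule ccontr)
  assume "\<not> det S > 0"
  then have "det S \<le> 0" by simp
  let ?f = "\<lambda>t::real. det ((1 - t) *\<^sub>R mat 1 + t *\<^sub>R S)"
  have f0: "?f 0 = 1" by simp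
  have f1: "?f 1 = det S" by simp
  obtain t where t: "0 \<le> t" "t \<le> 1" "?f t = 0"
    using IVT2'[of ?f 1 0 0] f0 f1 \<open>det S \<le> 0\<close> continuous_on_subset[OF cont_det_path] by force
  have "posq ((1 - t) *\<^sub>R mat 1 + t *\<^sub>R S)"
    unfolding posq_def
  proof (intro allI impI)
    fix v :: "real^'a" assume v: "v \<noteq> 0"
    have a: "0 < v \<bullet> v" using v by simp
    have b: "0 < v \<bullet> (S *v v)" using v assms unfolding posq_def by blast
    have sc: "\<And>k (A::real^'a^'a) x. (k *\<^sub>R A) *v x = k *\<^sub>R (A *v x)"
      by (simp add: vec_eq_iff matrix_vector_mult_def sum_distrib_left algebra_simps)
    have "v \<bullet> (((1 - t) *\<^sub>R mat 1 + t *\<^sub>R S) *v v) = (1 - t) * (v \<bullet> v) + t * (v \<bullet> (S *v v))"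
      by (simp add: matrix_vector_mult_add_rdistrib sc inner_add_right)
    also have "\<dots> > 0"
    proof (cases "t = 0")
      case True then show ?thesis using a by simp
    next
      case False then have "t > 0" using t by simp
      then show ?thesis using a b t(2) by (simp add: add_nonneg_pos)
    qed
    finally show "0 < v \<bullet> (((1 - t) *\<^sub>R mat 1 + t *\<^sub>R S) *v v)" .
  qed
  then show False using posq_det_nz t(3) by blast
qed


lemma integrable_exp_sq1: assumes a: "a > 0" shows "integrable lborel (\<lambda>t::real. exp (- a * t^2))"
proof -
  define s where "s = 1 / sqrt (2 * a)"
  have s2: "2 * s^2 = 1 / a" using a unfolding s_def by (simp add: power_divide)
  have eq: "exp (- a * t^2) = sqrt (2 * pi * s^2) * normal_density 0 s t" for t
  proof -
    have "sqrt (2 * pi * s^2) > 0" using a s_def by simp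
    moreover have "- ((t - 0)^2) / (2 * s^2) = - a * t^2" using s2 a by simp
    moreover have "s > 0" using a unfolding s_def by simp
    ultimately show ?thesis unfolding normal_density_def by simp
  qed
  have "s > 0" using a unfolding s_def by simp
  then show ?thesis unfolding eq by (intro integrable_mult_right integrable_normal_density)
qed

lemma integrable_exp_sq: assumes a: "a > 0"
  shows "integrable lborel (\<lambda>x::'n::euclidean_space. exp (- a * (norm x)^2))"
proof (rule integrableI_nonneg)
  show "(\<lambda>x::'n. exp (- a * (norm x)^2)) \<in> borel_measurable lborel" by measurable
  show "AE x in lborel. 0 \<le> exp (- a * (norm (x::'n))^2)" by simp
  have pr: "exp (- a * (norm x)^2) = (\<Prod>b\<in>Basis. exp (- a * (x \<bullet> b)^2))" for x :: 'n
  proof -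
    have "(norm x)^2 = (\<Sum>b\<in>Basis. (x \<bullet> b)^2)"
      unfolding power2_norm_eq_inner using euclidean_inner[of x x] by (simp add: power2_eq_square)
    then have "- a * (norm x)^2 = (\<Sum>b\<in>Basis. - a * (x \<bullet> b)^2)" by (simp add: sum_distrib_left)
    then show ?thesis by (simp add: exp_sum)
  qed
  have "(\<integral>\<^sup>+x. ennreal (exp (- a * (norm (x::'n))^2)) \<partial>lborel)
      = (\<integral>\<^sup>+x. (\<Prod>b\<in>(Basis::'n set). ennreal (exp (- a * (x \<bullet> b)^2))) \<partial>lborel)"
    by (subst pr) (simp add: prod_ennreal)
  also have "\<dots> = (\<Prod>b\<in>(Basis::'n set). (\<integral>\<^sup>+t. ennreal (exp (- a * t^2)) \<partial>lborel))"
    by (rule nn_integral_lborel_prod[where f="\<lambda>b t. ennreal (exp (- a * t^2))"]) auto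
  also have "\<dots> < \<infinity>"
  proof -
    have "(\<integral>\<^sup>+t. ennreal (exp (- a * t^2)) \<partial>lborel) = ennreal (\<integral>t. exp (- a * t^2) \<partial>lborel)"
      by (rule nn_integral_eq_integral[OF integrable_exp_sq1[OF a]]) auto
    then show ?thesis by (simp add: power_less_top_ennreal)
  qed
  finally show "(\<integral>\<^sup>+x. ennreal (exp (- a * (norm (x::'n))^2)) \<partial>lborel) < \<infinity>" .
qed


lemma pos_def_posq: "pos_def_mat S \<Longrightarrow> posq S"
  unfolding pos_def_mat_def posq_def by blast

lemma gauss_denom_pos: assumes "posq (S::real^'n^'n)" shows "sqrt ((2 * pi) ^ CARD('n) * det S) > 0"
proof -
  have "det S > 0" using posq_det_pos[OF assms] .
  moreover have "(2 * pi) ^ CARD('n) > 0" by simp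
  ultimately show ?thesis by (simp del: power_mult_distrib)
qed

lemma gauss_pos: "posq S \<Longrightarrow> 0 < gauss_density mu S x"
  unfolding gauss_density_def using gauss_denom_pos by (intro divide_pos_pos) auto

lemma cont_mv[continuous_intros]: "continuous_on s f \<Longrightarrow> continuous_on s (\<lambda>x. (A::real^'n^'m) *v f x)"
  by (rule continuous_on_compose2[OF linear_continuous_on[OF matrix_vector_mul_bounded_linear]]) auto

lemma gauss_cont: assumes "posq S" shows "continuous_on UNIV (gauss_density mu S)"
  unfolding gauss_density_def using gauss_denom_pos[OF assms]
  by (intro continuous_intros) auto

lemma gauss_meas: "posq S \<Longrightarrow> gauss_density mu S \<in> borel_measurable lborel"
  using borel_measurable_continuous_onI[OF gauss_cont] by simp

lemma norm_sq_shift: "(norm (x::'a::real_normed_vector))^2 \<le> 2 * (norm (x - m))^2 + 2 * (norm m)^2"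
proof -
  have "norm x \<le> norm (x - m) + norm m" using norm_triangle_ineq[of "x - m" m] by simp
  then have "(norm x)^2 \<le> (norm (x - m) + norm m)^2" by (simp add: power_mono)
  also have "\<dots> \<le> 2 * (norm (x - m))^2 + 2 * (norm m)^2"
  proof -
    have "0 \<le> (norm (x - m) - norm m)^2" by simp
    then show ?thesis by (simp add: power2_eq_square algebra_simps)
  qed
  finally show ?thesis .
qed

lemma gauss_upper: assumes "posq S"
  shows "\<exists>K c. c > 0 \<and> (\<forall>x. gauss_density mu S x \<le> K * exp (- c * (norm x)^2))"
proof -
  obtain c where c: "c > 0" "\<And>v. c * (norm v)^2 \<le> v \<bullet> (matrix_inv S *v v)"
    using posq_lower[OF posq_inv[OF assms]] by blast
  define D where "D = sqrt ((2 * pi) ^ CARD('a) * det S)"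
  have D: "D > 0" using gauss_denom_pos[OF assms] unfolding D_def .
  have "\<forall>x. gauss_density mu S x \<le> exp (c/2 * (norm mu)^2) / D * exp (- (c/4) * (norm x)^2)"
  proof
    fix x
    have q: "c * (norm (x - mu))^2 \<le> (x - mu) \<bullet> (matrix_inv S *v (x - mu))" using c by blast
    have s: "(norm x)^2 \<le> 2 * (norm (x - mu))^2 + 2 * (norm mu)^2" by (rule norm_sq_shift)
    have "- (1/2) * ((x - mu) \<bullet> (matrix_inv S *v (x - mu))) \<le> c/2 * (norm mu)^2 + - (c/4) * (norm x)^2"
      using q s c mult_left_mono[OF s, of c] by (simp add: algebra_simps)
    then have "exp (- (1/2) * ((x - mu) \<bullet> (matrix_inv S *v (x - mu)))) \<le> exp (c/2 * (norm mu)^2) * exp (- (c/4) * (norm x)^2)"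
      by (simp add: exp_add[symmetric])
    then show "gauss_density mu S x \<le> exp (c/2 * (norm mu)^2) / D * exp (- (c/4) * (norm x)^2)"
      unfolding gauss_density_def D_def[symmetric] using D by (simp add: divide_right_mono field_simps)
  qed
  moreover have "c / 4 > 0" using c by simp
  ultimately show ?thesis by blast
qed

lemma one_plus_le_exp: fixes a s :: real assumes "a > 0" "s \<ge> 0" shows "1 + s \<le> (1 + 2/a) * exp (a/2 * s)"
proof -
  have e1: "1 \<le> exp (a/2 * s)" using assms by simp
  have "1 + a/2 * s \<le> exp (a/2 * s)" by (rule exp_ge_add_one_self_aux) (use assms in simp)
  then have "s \<le> 2/a * exp (a/2 * s)" using assms by (simp add: field_simps)
  moreover have "(1 + 2/a) * exp (a/2 * s) = exp (a/2 * s) + 2/a * exp (a/2 * s)" by (simp add: algebra_simps)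
  ultimately show ?thesis using e1 by linarith
qed

lemma gauss_moment_integrable: assumes "posq S"
  shows "integrable lborel (\<lambda>x. gauss_density mu S x * (1 + (norm x)^2))"
proof -
  obtain K c where c: "c > 0" "\<And>x. gauss_density mu S x \<le> K * exp (- c * (norm x)^2)"
    using gauss_upper[OF assms] by blast
  have int: "integrable lborel (\<lambda>x::real^'a. K * (1 + 2/c) * exp (- (c/2) * (norm x)^2))"
    by (rule integrable_mult_right) (use integrable_exp_sq[of "c/2"] c in simp)
  show ?thesis
  proof (rule Bochner_Integration.integrable_bound[OF int])
    show "(\<lambda>x. gauss_density mu S x * (1 + (norm x)^2)) \<in> borel_measurable lborel"
      using gauss_meas[OF assms] by measurable
    show "AE x in lborel. norm (gauss_density mu S x * (1 + (norm x)^2)) \<le> norm (K * (1 + 2/c) * exp (- (c/2) * (norm x)^2))"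
    proof (rule AE_I2)
      fix x :: "real^'a"
      have g: "0 < gauss_density mu S x" using gauss_pos[OF assms] .
      have K: "K \<ge> 0" using c(2)[of x] g by (smt (verit) exp_gt_zero mult_neg_pos)
      have "gauss_density mu S x * (1 + (norm x)^2) \<le> K * exp (- c * (norm x)^2) * ((1 + 2/c) * exp (c/2 * (norm x)^2))"
        by (rule mult_mono[OF c(2) one_plus_le_exp]) (use c g K in auto)
      also have "\<dots> = K * (1 + 2/c) * exp (- (c/2) * (norm x)^2)"
        by (simp add: exp_add[symmetric] algebra_simps)
      finally show "norm (gauss_density mu S x * (1 + (norm x)^2)) \<le> norm (K * (1 + 2/c) * exp (- (c/2) * (norm x)^2))"
        using g K c by simp
    qed
  qed
qed


lemma ln_gauss_bound: assumes "posq S"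
  shows "\<exists>K. \<forall>x. \<bar>ln (gauss_density mu S x)\<bar> \<le> K * (1 + (norm x)^2)"
proof -
  obtain C where C: "C > 0" "\<And>v. \<bar>v \<bullet> (matrix_inv S *v v)\<bar> \<le> C * (norm v)^2"
    using quad_upper by blast
  define D where "D = sqrt ((2 * pi) ^ CARD('a) * det S)"
  have D: "D > 0" using gauss_denom_pos[OF assms] unfolding D_def .
  have "\<bar>ln (gauss_density mu S x)\<bar> \<le> (C + C * (norm mu)^2 + \<bar>ln D\<bar>) * (1 + (norm x)^2)" for x
  proof -
    let ?Q = "(x - mu) \<bullet> (matrix_inv S *v (x - mu))"
    have l: "ln (gauss_density mu S x) = - (1/2) * ?Q - ln D"
      unfolding gauss_density_def D_def[symmetric] using D by (simp add: ln_div)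
    have s: "(norm (x - mu))^2 \<le> 2 * (norm x)^2 + 2 * (norm mu)^2"
      using norm_sq_shift[of "x - mu" "- mu"] by simp
    have "\<bar>?Q\<bar> \<le> C * (norm (x - mu))^2" using C by blast
    also have "\<dots> \<le> C * (2 * (norm x)^2 + 2 * (norm mu)^2)" using s C by simp
    finally have q: "\<bar>?Q\<bar> \<le> C * (2 * (norm x)^2 + 2 * (norm mu)^2)" .
    have "\<bar>ln (gauss_density mu S x)\<bar> \<le> (1/2) * \<bar>?Q\<bar> + \<bar>ln D\<bar>" unfolding l by linarith
    also have "\<dots> \<le> C * (norm x)^2 + C * (norm mu)^2 + \<bar>ln D\<bar>" using q by (simp add: algebra_simps)
    also have "\<dots> \<le> (C + C * (norm mu)^2 + \<bar>ln D\<bar>) * (1 + (norm x)^2)"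
    proof -
      have "0 \<le> (C * (norm mu)^2 + \<bar>ln D\<bar>) * (norm x)^2 + C" using C by simp
      then show ?thesis by (simp add: algebra_simps)
    qed
    finally show ?thesis .
  qed
  then show ?thesis by blast
qed

lemma KL_gauss_integrable: assumes "posq S1" "posq S2"
  shows "integrable lborel (\<lambda>x. gauss_density m1 S1 x * ln (gauss_density m1 S1 x / gauss_density m2 S2 x))"
proof -
  obtain K1 where K1: "\<And>x. \<bar>ln (gauss_density m1 S1 x)\<bar> \<le> K1 * (1 + (norm x)^2)"
    using ln_gauss_bound[OF assms(1)] by blast
  obtain K2 where K2: "\<And>x. \<bar>ln (gauss_density m2 S2 x)\<bar> \<le> K2 * (1 + (norm x)^2)"
    using ln_gauss_bound[OF assms(2)] by blast
  have int: "integrable lborel (\<lambda>x. (K1 + K2) * (gauss_density m1 S1 x * (1 + (norm x)^2)))"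
    by (intro integrable_mult_right gauss_moment_integrable assms)
  show ?thesis
  proof (rule Bochner_Integration.integrable_bound[OF int])
    show "(\<lambda>x. gauss_density m1 S1 x * ln (gauss_density m1 S1 x / gauss_density m2 S2 x)) \<in> borel_measurable lborel"
      using gauss_meas[OF assms(1)] gauss_meas[OF assms(2)] by measurable
    show "AE x in lborel. norm (gauss_density m1 S1 x * ln (gauss_density m1 S1 x / gauss_density m2 S2 x))
        \<le> norm ((K1 + K2) * (gauss_density m1 S1 x * (1 + (norm x)^2)))"
    proof (rule AE_I2)
      fix x
      have g1: "gauss_density m1 S1 x > 0" using gauss_pos[OF assms(1)] .
      have g2: "gauss_density m2 S2 x > 0" using gauss_pos[OF assms(2)] .
      have "\<bar>ln (gauss_density m1 S1 x / gauss_density m2 S2 x)\<bar> \<le> (K1 + K2) * (1 + (norm x)^2)"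
        using K1[of x] K2[of x] g1 g2 by (simp add: ln_div algebra_simps)
      then have "gauss_density m1 S1 x * \<bar>ln (gauss_density m1 S1 x / gauss_density m2 S2 x)\<bar>
          \<le> gauss_density m1 S1 x * ((K1 + K2) * (1 + (norm x)^2))"
        using g1 by (simp add: mult_left_mono)
      moreover have "0 \<le> (K1 + K2) * (1 + (norm x)^2)"
        using order_trans[OF abs_ge_zero K1[of x]] order_trans[OF abs_ge_zero K2[of x]] by (simp add: distrib_right)
      ultimately show "norm (gauss_density m1 S1 x * ln (gauss_density m1 S1 x / gauss_density m2 S2 x))
        \<le> norm ((K1 + K2) * (gauss_density m1 S1 x * (1 + (norm x)^2)))"
        using g1 by (simp add: abs_mult algebra_simps)
    qed
  qed
qed


lemma term_bound:
  fixes a b A B :: real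
  assumes "a \<ge> 0" "b \<ge> 0" "b = 0 \<Longrightarrow> a = 0" "A > 0" "B > 0"
  shows "a * ln (A / B) + a - b * A / B \<le> a * ln (a / b)"
proof (cases "a = 0")
  case True then show ?thesis using assms by simp
next
  case False
  then have a: "a > 0" using assms by simp
  have b: "b > 0" using assms False by force
  have y: "(a * B) / (b * A) > 0" using a b assms by simp
  have "ln ((b * A) / (a * B)) \<le> (b * A) / (a * B) - 1"
    using ln_le_minus_one[of "(b * A) / (a * B)"] a b assms by simp
  moreover have "ln ((b * A) / (a * B)) = ln (A / B) - ln (a / b)"
    using a b assms by (simp add: ln_div ln_mult)
  ultimately have "ln (A / B) - ln (a / b) \<le> (b * A) / (a * B) - 1" by simp
  then have "a * (ln (A / B) - ln (a / b)) \<le> a * ((b * A) / (a * B) - 1)"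
    using a by (simp add: mult_left_mono)
  also have "\<dots> = b * A / B - a" using a assms by (simp add: field_simps)
  finally show ?thesis by (simp add: algebra_simps)
qed

lemma logsum3:
  fixes a1 a2 a3 b1 b2 b3 :: real
  assumes "a1 \<ge> 0" "b1 \<ge> 0" "b1 = 0 \<Longrightarrow> a1 = 0"
    "a2 \<ge> 0" "b2 \<ge> 0" "b2 = 0 \<Longrightarrow> a2 = 0"
    "a3 \<ge> 0" "b3 \<ge> 0" "b3 = 0 \<Longrightarrow> a3 = 0"
    "a1 + a2 + a3 > 0" "b1 + b2 + b3 > 0"
  shows "(a1 + a2 + a3) * ln ((a1 + a2 + a3) / (b1 + b2 + b3))
     \<le> a1 * ln (a1 / b1) + a2 * ln (a2 / b2) + a3 * ln (a3 / b3)"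
proof -
  let ?A = "a1 + a2 + a3" and ?B = "b1 + b2 + b3"
  have 1: "a1 * ln (?A / ?B) + a1 - b1 * ?A / ?B \<le> a1 * ln (a1 / b1)"
    by (rule term_bound) (use assms in auto)
  have 2: "a2 * ln (?A / ?B) + a2 - b2 * ?A / ?B \<le> a2 * ln (a2 / b2)"
    by (rule term_bound) (use assms in auto)
  have 3: "a3 * ln (?A / ?B) + a3 - b3 * ?A / ?B \<le> a3 * ln (a3 / b3)"
    by (rule term_bound) (use assms in auto)
  have "b1 * ?A / ?B + b2 * ?A / ?B + b3 * ?A / ?B = (b1 + b2 + b3) * ?A / ?B"
    by (simp add: add_divide_distrib[symmetric] distrib_right)
  also have "\<dots> = ?A" using assms by simp
  finally have s: "b1 * ?A / ?B + b2 * ?A / ?B + b3 * ?A / ?B = ?A" .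
  have d: "?A * ln (?A / ?B) = a1 * ln (?A / ?B) + a2 * ln (?A / ?B) + a3 * ln (?A / ?B)"
    by (simp add: distrib_right)
  show ?thesis using 1 2 3 s d by linarith
qed

lemma scale_kl: "(l::real) * x * ln ((l * x) / (l * y)) = l * (x * ln (x / y))"
  by (cases "l = 0") simp_all

lemma self_kl: "(A::real) * ln (A / A) = 0"
  by (cases "A = 0") simp_all

lemma pointwise1:
  fixes A li lj u v g :: real
  assumes "A \<ge> 0" "li \<ge> 0" "lj \<ge> 0" "li + lj > 0" "u > 0" "v > 0" "g > 0"
  shows "(A + li * u + lj * v) * ln ((A + li * u + lj * v) / (A + (li + lj) * g))
     \<le> li * (u * ln (u / g)) + lj * (v * ln (v / g))"
proof -
  have pos: "li * u + lj * v > 0"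
    using assms by (smt (verit) mult_nonneg_nonneg mult_pos_pos)
  have pos2: "li * g + lj * g > 0"
    using assms by (smt (verit) mult_nonneg_nonneg mult_pos_pos)
  have "(A + li * u + lj * v) * ln ((A + li * u + lj * v) / (A + li * g + lj * g))
     \<le> A * ln (A / A) + (li * u) * ln ((li * u) / (li * g)) + (lj * v) * ln ((lj * v) / (lj * g))"
    by (rule logsum3) (use assms pos pos2 in auto)
  moreover have eqB: "A + li * g + lj * g = A + (li + lj) * g" by (simp add: algebra_simps)
  ultimately show ?thesis unfolding self_kl scale_kl eqB by linarith
qed

lemma pointwise2:
  fixes A li lj u v g :: real
  assumes "A \<ge> 0" "li \<ge> 0" "lj \<ge> 0" "li + lj > 0" "u > 0" "v > 0" "g > 0"
  shows "(A + (li + lj) * g) * ln ((A + (li + lj) * g) / (A + li * u + lj * v))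
     \<le> li * (g * ln (g / u)) + lj * (g * ln (g / v))"
proof -
  have pos: "li * u + lj * v > 0"
    using assms by (smt (verit) mult_nonneg_nonneg mult_pos_pos)
  have pos2: "li * g + lj * g > 0"
    using assms by (smt (verit) mult_nonneg_nonneg mult_pos_pos)
  have "(A + li * g + lj * g) * ln ((A + li * g + lj * g) / (A + li * u + lj * v))
     \<le> A * ln (A / A) + (li * g) * ln ((li * g) / (li * u)) + (lj * g) * ln ((lj * g) / (lj * v))"
    by (rule logsum3) (use assms pos pos2 in auto)
  moreover have eqB: "A + li * g + lj * g = A + (li + lj) * g" by (simp add: algebra_simps)
  ultimately show ?thesis unfolding self_kl scale_kl eqB by linarith
qed

lemma plnq_lower: "(p::real) > 0 \<Longrightarrow> q > 0 \<Longrightarrow> p - q \<le> p * ln (p / q)"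
  using term_bound[of p q 1 1] by simp


lemma sc_mv: "(k *\<^sub>R (A::real^'n^'m)) *v x = k *\<^sub>R (A *v x)"
  by (simp add: vec_eq_iff matrix_vector_mult_def sum_distrib_left algebra_simps)

lemma outer_mv: "v \<bullet> (outer d d *v v) = (d \<bullet> (v::real^'n))^2"
proof -
  have "outer d d *v v = (d \<bullet> v) *\<^sub>R d"
    by (simp add: vec_eq_iff outer_def matrix_vector_mult_def inner_vec_def sum_distrib_left algebra_simps)
  then show ?thesis by (simp add: inner_commute power2_eq_square)
qed

lemma merged_posq:
  fixes li lj :: real
  assumes "li \<ge> 0" "lj \<ge> 0" "li + lj > 0" "posq Si" "posq Sj"
  shows "posq ((1 / (li + lj)) *\<^sub>R (li *\<^sub>R Si + lj *\<^sub>R Sj + (li * lj) *\<^sub>R outer d d))"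
  unfolding posq_def
proof (intro allI impI)
  fix v :: "real^'a" assume v: "v \<noteq> 0"
  have a: "v \<bullet> (Si *v v) > 0" "v \<bullet> (Sj *v v) > 0" using v assms unfolding posq_def by auto
  have "v \<bullet> (((1 / (li + lj)) *\<^sub>R (li *\<^sub>R Si + lj *\<^sub>R Sj + (li * lj) *\<^sub>R outer d d)) *v v)
      = (1 / (li + lj)) * (li * (v \<bullet> (Si *v v)) + lj * (v \<bullet> (Sj *v v)) + (li * lj) * (d \<bullet> v)^2)"
    by (simp add: sc_mv matrix_vector_mult_add_rdistrib inner_add_right outer_mv)
  also have "\<dots> > 0"
  proof -
    have "li * (v \<bullet> (Si *v v)) + lj * (v \<bullet> (Sj *v v)) > 0"
      using assms a by (smt (verit) mult_nonneg_nonneg mult_pos_pos)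
    moreover have "(li * lj) * (d \<bullet> v)^2 \<ge> 0" using assms by simp
    ultimately have "li * (v \<bullet> (Si *v v)) + lj * (v \<bullet> (Sj *v v)) + (li * lj) * (d \<bullet> v)^2 > 0" by linarith
    then show ?thesis using assms by simp
  qed
  finally show "0 < v \<bullet> (((1 / (li + lj)) *\<^sub>R (li *\<^sub>R Si + lj *\<^sub>R Sj + (li * lj) *\<^sub>R outer d d)) *v v)" .
qed

lemma prob_density_integrable: "prob_density f \<Longrightarrow> integrable lborel f"
  unfolding prob_density_def by (intro integrableI_nonneg) auto

lemma gauss_integrable: assumes "posq S" shows "integrable lborel (gauss_density m S)"
proof (rule Bochner_Integration.integrable_bound[OF gauss_moment_integrable[OF assms, of m]])
  show "gauss_density m S \<in> borel_measurable lborel" using gauss_meas[OF assms] .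
  show "AE x in lborel. norm (gauss_density m S x) \<le> norm (gauss_density m S x * (1 + (norm x)^2))"
  proof (intro AE_I2)
    fix x :: "real^'a"
    have "0 < gauss_density m S x" using gauss_pos[OF assms] .
    then show "norm (gauss_density m S x) \<le> norm (gauss_density m S x * (1 + (norm x)^2))"
      by (simp add: abs_mult)
  qed
qed


lemma main_abstract:
  fixes n :: nat and i j :: nat
    and lam :: "nat \<Rightarrow> real"
    and pk :: "nat \<Rightarrow> real^'d \<Rightarrow> real"
    and mu :: "nat \<Rightarrow> real^'d" and Sig :: "nat \<Rightarrow> real^'d^'d"
  assumes lam_nonneg: "\<forall>k\<in>{1..n}. 0 \<le> lam k"
    and dens: "\<forall>k\<in>{1..n}. prob_density (pk k)"
    and ij: "i \<in> {1..n}" "j \<in> {1..n}" "i \<noteq> j"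
    and lam_ij_pos: "lam i + lam j > 0"
    and Sig_i: "posq (Sig i)" and Sig_j: "posq (Sig j)"
    and gauss_i: "pk i = gauss_density (mu i) (Sig i)"
    and gauss_j: "pk j = gauss_density (mu j) (Sig j)"
    and T: "posq T"
  shows "dsKL (\<lambda>x. \<Sum>k\<in>{1..n}. lam k * pk k x)
     (\<lambda>x. (\<Sum>k\<in>{1..n} - {i, j}. lam k * pk k x) + (lam i + lam j) * gauss_density m T x)
    \<le> lam i * dsKL (pk i) (gauss_density m T) + lam j * dsKL (pk j) (gauss_density m T)"
proof -
  define g where "g = gauss_density m T"
  define A where "A = (\<lambda>x. \<Sum>k\<in>{1..n} - {i, j}. lam k * pk k x)"
  define p where "p = (\<lambda>x. \<Sum>k\<in>{1..n}. lam k * pk k x)"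
  define q where "q = (\<lambda>x. A x + (lam i + lam j) * g x)"
  have li: "lam i \<ge> 0" and lj: "lam j \<ge> 0" using lam_nonneg ij by auto
  have pk_int: "integrable lborel (pk k)" if "k \<in> {1..n}" for k
    using dens that prob_density_integrable by blast
  have pk_nn: "pk k x \<ge> 0" if "k \<in> {1..n}" for k x
    using dens that unfolding prob_density_def by blast
  have A_nn: "A x \<ge> 0" for x
    unfolding A_def using lam_nonneg pk_nn by (intro sum_nonneg) auto
  have A_int: "integrable lborel A"
    unfolding A_def by (intro Bochner_Integration.integrable_sum integrable_mult_right pk_int) auto
  have g_int: "integrable lborel g" unfolding g_def using gauss_integrable[OF T] .
  have g_pos: "g x > 0" for x unfolding g_def using gauss_pos[OF T] .
  have pi_pos: "pk i x > 0" for x unfolding gauss_i using gauss_pos[OF Sig_i] .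
  have pj_pos: "pk j x > 0" for x unfolding gauss_j using gauss_pos[OF Sig_j] .
  have p_eq: "p x = A x + lam i * pk i x + lam j * pk j x" for x
  proof -
    have "p x = lam i * pk i x + (\<Sum>k\<in>{1..n} - {i}. lam k * pk k x)"
      unfolding p_def using ij by (simp add: sum.remove)
    also have "(\<Sum>k\<in>{1..n} - {i}. lam k * pk k x) = lam j * pk j x + (\<Sum>k\<in>{1..n} - {i} - {j}. lam k * pk k x)"
      using ij by (subst sum.remove[of _ j]) auto
    also have "{1..n} - {i} - {j} = {1..n} - {i, j}" by auto
    finally show ?thesis unfolding A_def by simp
  qed
  have p_int: "integrable lborel p"
    unfolding p_def by (intro Bochner_Integration.integrable_sum integrable_mult_right pk_int) auto
  have q_int: "integrable lborel q"
    unfolding q_def using A_int g_int by (intro Bochner_Integration.integrable_add integrable_mult_right) auto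
  have p_meas[measurable]: "p \<in> borel_measurable lborel" using p_int by (rule borel_measurable_integrable)
  have q_meas[measurable]: "q \<in> borel_measurable lborel" using q_int by (rule borel_measurable_integrable)
  have p_pos: "p x > 0" for x
  proof -
    have "lam i * pk i x + lam j * pk j x > 0"
      using li lj lam_ij_pos pi_pos[of x] pj_pos[of x] by (smt (verit) mult_nonneg_nonneg mult_pos_pos)
    then show ?thesis using p_eq A_nn[of x] by simp
  qed
  have q_pos: "q x > 0" for x
    unfolding q_def using A_nn[of x] lam_ij_pos g_pos[of x] by (simp add: add_nonneg_pos)
  have Ki: "integrable lborel (\<lambda>x. pk i x * ln (pk i x / g x))"
    unfolding gauss_i g_def by (rule KL_gauss_integrable[OF Sig_i T])
  have Kj: "integrable lborel (\<lambda>x. pk j x * ln (pk j x / g x))"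
    unfolding gauss_j g_def by (rule KL_gauss_integrable[OF Sig_j T])
  have Ki': "integrable lborel (\<lambda>x. g x * ln (g x / pk i x))"
    unfolding gauss_i g_def by (rule KL_gauss_integrable[OF T Sig_i])
  have Kj': "integrable lborel (\<lambda>x. g x * ln (g x / pk j x))"
    unfolding gauss_j g_def by (rule KL_gauss_integrable[OF T Sig_j])
  define G1 where "G1 = (\<lambda>x. lam i * (pk i x * ln (pk i x / g x)) + lam j * (pk j x * ln (pk j x / g x)))"
  define G2 where "G2 = (\<lambda>x. lam i * (g x * ln (g x / pk i x)) + lam j * (g x * ln (g x / pk j x)))"
  have G1_int: "integrable lborel G1" unfolding G1_def using Ki Kj by auto
  have G2_int: "integrable lborel G2" unfolding G2_def using Ki' Kj' by auto
  define F1 where "F1 = (\<lambda>x. p x * ln (p x / q x))"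
  define F2 where "F2 = (\<lambda>x. q x * ln (q x / p x))"
  have F1_le: "F1 x \<le> G1 x" for x
    unfolding F1_def G1_def p_eq q_def
    by (rule pointwise1) (use A_nn li lj lam_ij_pos pi_pos pj_pos g_pos in auto)
  have F2_le: "F2 x \<le> G2 x" for x
    unfolding F2_def G2_def p_eq q_def
    by (rule pointwise2) (use A_nn li lj lam_ij_pos pi_pos pj_pos g_pos in auto)
  have F1_ge: "p x - q x \<le> F1 x" for x unfolding F1_def using p_pos q_pos by (intro plnq_lower)
  have F2_ge: "q x - p x \<le> F2 x" for x unfolding F2_def using p_pos q_pos by (intro plnq_lower)
  have B1: "integrable lborel (\<lambda>x. \<bar>p x - q x\<bar> + \<bar>G1 x\<bar>)"
    using p_int q_int G1_int by (intro Bochner_Integration.integrable_add Bochner_Integration.integrable_abs Bochner_Integration.integrable_diff) auto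
  have B2: "integrable lborel (\<lambda>x. \<bar>q x - p x\<bar> + \<bar>G2 x\<bar>)"
    using p_int q_int G2_int by (intro Bochner_Integration.integrable_add Bochner_Integration.integrable_abs Bochner_Integration.integrable_diff) auto
  have F1_int: "integrable lborel F1"
  proof (rule Bochner_Integration.integrable_bound[OF B1])
    show "F1 \<in> borel_measurable lborel" unfolding F1_def by measurable
    show "AE x in lborel. norm (F1 x) \<le> norm (\<bar>p x - q x\<bar> + \<bar>G1 x\<bar>)"
      using F1_le F1_ge by (intro AE_I2) (smt (verit) real_norm_def)
  qed
  have F2_int: "integrable lborel F2"
  proof (rule Bochner_Integration.integrable_bound[OF B2])
    show "F2 \<in> borel_measurable lborel" unfolding F2_def by measurable
    show "AE x in lborel. norm (F2 x) \<le> norm (\<bar>q x - p x\<bar> + \<bar>G2 x\<bar>)"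
      using F2_le F2_ge by (intro AE_I2) (smt (verit) real_norm_def)
  qed
  have I1: "integral\<^sup>L lborel F1 \<le> integral\<^sup>L lborel G1"
    using F1_int G1_int F1_le by (intro integral_mono) auto
  have I2: "integral\<^sup>L lborel F2 \<le> integral\<^sup>L lborel G2"
    using F2_int G2_int F2_le by (intro integral_mono) auto
  have eG1: "integral\<^sup>L lborel G1 = lam i * KL (pk i) g + lam j * KL (pk j) g"
    unfolding G1_def KL_def using Ki Kj by simp
  have eG2: "integral\<^sup>L lborel G2 = lam i * KL g (pk i) + lam j * KL g (pk j)"
    unfolding G2_def KL_def using Ki' Kj' by simp
  have "dsKL p q = integral\<^sup>L lborel F1 + integral\<^sup>L lborel F2"
    unfolding dsKL_def KL_def F1_def F2_def ..
  also have "\<dots> \<le> lam i * dsKL (pk i) g + lam j * dsKL (pk j) g"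
    using I1 I2 eG1 eG2 unfolding dsKL_def by (simp add: algebra_simps)
  finally show ?thesis unfolding p_def q_def A_def g_def .
qed

theorem mainTheorem3:
  fixes n :: nat and i j :: nat
    and lam :: "nat \<Rightarrow> real"
    and pk :: "nat \<Rightarrow> real^'d \<Rightarrow> real"
    and mu :: "nat \<Rightarrow> real^'d" and Sig :: "nat \<Rightarrow> real^'d^'d"
  assumes lam_nonneg: "\<forall>k\<in>{1..n}. 0 \<le> lam k"
    and lam_sum: "(\<Sum>k\<in>{1..n}. lam k) = 1"
    and dens: "\<forall>k\<in>{1..n}. prob_density (pk k)"
    and ij: "i \<in> {1..n}" "j \<in> {1..n}" "i \<noteq> j"
    and lam_ij_pos: "lam i + lam j > 0"
    and Sig_i: "pos_def_mat (Sig i)" and Sig_j: "pos_def_mat (Sig j)"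
    and gauss_i: "pk i = gauss_density (mu i) (Sig i)"
    and gauss_j: "pk j = gauss_density (mu j) (Sig j)"
  shows
    "let lij = lam i + lam j;
         muij = (lam i / lij) *\<^sub>R mu i + (lam j / lij) *\<^sub>R mu j;
         Sigij = (1 / lij) *\<^sub>R (lam i *\<^sub>R Sig i + lam j *\<^sub>R Sig j
                   + (lam i * lam j) *\<^sub>R outer (mu i - mu j) (mu i - mu j));
         pij = gauss_density muij Sigij;
         p = (\<lambda>x. \<Sum>k\<in>{1..n}. lam k * pk k x);
         papp = (\<lambda>x. (\<Sum>k\<in>{1..n} - {i, j}. lam k * pk k x) + lij * pij x)
     in dsKL p papp \<le> lam i * dsKL (pk i) pij + lam j * dsKL (pk j) pij"
proof -
  have li: "lam i \<ge> 0" and lj: "lam j \<ge> 0" using lam_nonneg ij by auto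
  have T: "posq ((1 / (lam i + lam j)) *\<^sub>R (lam i *\<^sub>R Sig i + lam j *\<^sub>R Sig j
                   + (lam i * lam j) *\<^sub>R outer (mu i - mu j) (mu i - mu j)))"
    by (rule merged_posq[OF li lj lam_ij_pos pos_def_posq[OF Sig_i] pos_def_posq[OF Sig_j]])
  show ?thesis unfolding Let_def
    by (rule main_abstract[OF lam_nonneg dens ij lam_ij_pos pos_def_posq[OF Sig_i] pos_def_posq[OF Sig_j]
          gauss_i gauss_j T])
qed

end
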